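(* Let $\alpha: I\to M$ be a unit-speed curve on an oriented surface $M\subset E^3$ with Darboux frame $\{T,V,U\}$ and curvatures $k_g,k_n,\tau_g$. Consider the curve $\gamma$ defined in either of the following two cases: (a) $k_g\equiv0$ and $k_n,\tau_g$ nowhere zero on $I$, and $\gamma(s)=\alpha(s)+\frac{k_n'(s)}{k_n(s)^2\tau_g(s)}V(s)+\frac{1}{k_n(s)}U(s)$; (b) $k_g$ nowhere zero on $I$, $c_3$ a real constant, $\psi$ an antiderivative of $k_n\tau_g/k_g$, $\Phi$ an antiderivative of $e^{-\psi}\tau_g/k_g$, and $$\gamma(s)=\alpha(s)+\Big(\frac{k_n}{k_g}e^{\psi}(\Phi-c_3)+\frac{1}{k_g}\Big)(s)\,V(s)+\big(e^{\psi}(c_3-\Phi)\big)(s)\,U(s).$$ In either case assume $\gamma$ is regular. Then $\gamma$ is a general helix if and only if $\alpha$ is a relatively normal-slant helix on $M$.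
   Context: $M$ is an oriented surface in Euclidean 3-space $E^3$ and $\alpha:I\to M$ is a unit-speed curve with arc-length parameter $s$. Its Darboux frame $\{T,V,U\}$ consists of the unit tangent $T=\alpha'$, the unit surface normal $U$ of $M$ along $\alpha$, and $V=U\times T$; it satisfies $T'=k_gV+k_nU$, $V'=-k_gT+\tau_gU$, $U'=-k_nT-\tau_gV$, where $k_g,k_n,\tau_g$ are the geodesic curvature, normal curvature and geodesic torsion. A regular curve is a general helix if its unit tangent makes a constant angle with a fixed direction. $\alpha$ is a relatively normal-slant helix if $\langle V,d\rangle$ is constant for some fixed unit vector $d$. *)

theory Defs
  imports "HOL-Analysis.Analysis"
begin

type_synonym vec3 = "real ^ 3"

definition darboux_frame ::
  "real set \<Rightarrow> (real \<Rightarrow> vec3) \<Rightarrow> (real \<Rightarrow> vec3) \<Rightarrow> (real \<Rightarrow> vec3) \<Rightarrow> (real \<Rightarrow> vec3)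
   \<Rightarrow> (real \<Rightarrow> real) \<Rightarrow> (real \<Rightarrow> real) \<Rightarrow> (real \<Rightarrow> real) \<Rightarrow> bool" where
  "darboux_frame I \<alpha> T V U kg kn tg \<longleftrightarrow>
     (\<forall>s\<in>I.
        (\<alpha> has_vector_derivative T s) (at s) \<and>
        norm (T s) = 1 \<and> norm (U s) = 1 \<and> T s \<bullet> U s = 0 \<and>
        V s = cross3 (U s) (T s) \<and>
        (T has_vector_derivative (kg s *\<^sub>R V s + kn s *\<^sub>R U s)) (at s) \<and>
        (V has_vector_derivative (- kg s *\<^sub>R T s + tg s *\<^sub>R U s)) (at s) \<and>
        (U has_vector_derivative (- kn s *\<^sub>R T s - tg s *\<^sub>R V s)) (at s))"

definition regular_curve :: "real set \<Rightarrow> (real \<Rightarrow> vec3) \<Rightarrow> bool" where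
  "regular_curve I \<gamma> \<longleftrightarrow>
     (\<forall>s\<in>I. \<gamma> differentiable (at s) \<and> vector_derivative \<gamma> (at s) \<noteq> 0)"

definition general_helix :: "real set \<Rightarrow> (real \<Rightarrow> vec3) \<Rightarrow> bool" where
  "general_helix I \<gamma> \<longleftrightarrow> regular_curve I \<gamma> \<and>
     (\<exists>d c. norm d = 1 \<and>
        (\<forall>s\<in>I. (vector_derivative \<gamma> (at s) /\<^sub>R norm (vector_derivative \<gamma> (at s))) \<bullet> d = c))"

definition rel_normal_slant_helix :: "real set \<Rightarrow> (real \<Rightarrow> vec3) \<Rightarrow> bool" where
  "rel_normal_slant_helix I V \<longleftrightarrow> (\<exists>d c. norm d = 1 \<and> (\<forall>s\<in>I. V s \<bullet> d = c))"

end

theory Submission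
  imports Defs
begin

lemma darboux_core:
  fixes h h' :: "real \<Rightarrow> real"
  assumes ab: "a < b" and der: "\<And>t. t \<in> {a..b} \<Longrightarrow> (h has_real_derivative h' t) (at t)"
    and pa: "h' a > 0" and nb: "h' b < 0"
  shows "\<exists>t\<in>{a<..<b}. h' t = 0"
proof -
  have "continuous_on {a..b} h"
    using der by (meson DERIV_continuous continuous_at_imp_continuous_on)
  then obtain t where t: "t \<in> {a..b}" and mx: "\<And>y. y \<in> {a..b} \<Longrightarrow> h y \<le> h t"
    using continuous_attains_sup[of "{a..b}" h] ab by auto
  have "t \<noteq> a"
  proof
    assume "t = a"
    obtain d where d: "d > 0" "\<And>e. e > 0 \<Longrightarrow> e < d \<Longrightarrow> h a < h (a + e)"
      using DERIV_pos_inc_right[OF der pa] ab by auto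
    define e where "e = min (d/2) (b - a)"
    have "e > 0" "e < d" using d ab by (auto simp: e_def)
    then have "h a < h (a + e)" using d by auto
    moreover have "a + e \<in> {a..b}" using \<open>e > 0\<close> by (auto simp: e_def)
    ultimately show False using mx[of "a + e"] \<open>t = a\<close> by auto
  qed
  moreover have "t \<noteq> b"
  proof
    assume "t = b"
    obtain d where d: "d > 0" "\<And>e. e > 0 \<Longrightarrow> e < d \<Longrightarrow> h b < h (b - e)"
      using DERIV_neg_dec_left[OF der nb] ab by auto
    define e where "e = min (d/2) (b - a)"
    have "e > 0" "e < d" using d ab by (auto simp: e_def)
    then have "h b < h (b - e)" using d by auto
    moreover have "b - e \<in> {a..b}" using \<open>e > 0\<close> by (auto simp: e_def)
    ultimately show False using mx[of "b - e"] \<open>t = b\<close> by auto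
  qed
  ultimately have tin: "t \<in> {a<..<b}" using t by auto
  have "h' t = 0"
  proof (rule DERIV_local_max[OF der[of t]])
    show "t \<in> {a..b}" using t .
    show "0 < min (t - a) (b - t)" using tin by auto
    show "\<forall>y. \<bar>t - y\<bar> < min (t - a) (b - t) \<longrightarrow> h y \<le> h t"
    proof (intro allI impI)
      fix y assume "\<bar>t - y\<bar> < min (t - a) (b - t)"
      then have "y \<in> {a..b}" by (auto simp: abs_if split: if_splits)
      then show "h y \<le> h t" using mx by blast
    qed
  qed
  then show ?thesis using tin by blast
qed

lemma darboux_sign:
  fixes h h' :: "real \<Rightarrow> real"
  assumes ab: "a \<le> b" and der: "\<And>t. t \<in> {a..b} \<Longrightarrow> (h has_real_derivative h' t) (at t)"
    and nz: "\<And>t. t \<in> {a..b} \<Longrightarrow> h' t \<noteq> 0"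
  shows "h' a > 0 \<longleftrightarrow> h' b > 0"
proof (cases "a = b")
  case True then show ?thesis by simp
next
  case False
  then have ab': "a < b" using ab by simp
  have na: "h' a \<noteq> 0" "h' b \<noteq> 0" using nz ab by auto
  show ?thesis
  proof (rule ccontr)
    assume "\<not> ?thesis"
    then consider "h' a > 0" "h' b < 0" | "h' a < 0" "h' b > 0" using na by linarith
    then show False
    proof cases
      case 1
      then show False using darboux_core[OF ab' der] nz by fastforce
    next
      case 2
      have "\<exists>t\<in>{a<..<b}. - h' t = 0"
        by (rule darboux_core[OF ab', of "\<lambda>t. - h t"]) (use der 2 in \<open>auto intro: DERIV_minus\<close>)
      then show False using nz by fastforce
    qed
  qed
qed


lemma inner_deriv_const:
  fixes g :: "real \<Rightarrow> vec3"
  assumes "(g has_vector_derivative g') (at t)"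
  shows "((\<lambda>t. g t \<bullet> c) has_real_derivative (g' \<bullet> c)) (at t)"
  using bounded_linear.has_vector_derivative[OF bounded_linear_inner_left assms, of c]
  by (simp add: has_real_derivative_iff_has_vector_derivative)

lemma sign_local:
  fixes V \<gamma> :: "real \<Rightarrow> vec3" and f :: "real \<Rightarrow> real"
  assumes I: "open I"
    and Vc: "continuous_on I V"
    and nV: "\<And>s. s \<in> I \<Longrightarrow> norm (V s) = 1"
    and gd: "\<And>s. s \<in> I \<Longrightarrow> (\<gamma> has_vector_derivative f s *\<^sub>R V s) (at s)"
    and fnz: "\<And>s. s \<in> I \<Longrightarrow> f s \<noteq> 0"
    and a: "a \<in> I"
  shows "\<exists>e>0. ball a e \<subseteq> I \<and> (\<forall>x\<in>ball a e. (f x > 0) = (f a > 0))"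
proof -
  obtain e1 where e1: "e1 > 0" "ball a e1 \<subseteq> I" using I a open_contains_ball by blast
  have "isCont V a" using Vc I a continuous_on_eq_continuous_at by blast
  then have "\<forall>e>0. \<exists>d>0. \<forall>x. dist x a < d \<longrightarrow> dist (V x) (V a) < e"
    unfolding continuous_at_eps_delta .
  then obtain e2 where e2: "e2 > 0" "\<And>x. dist x a < e2 \<Longrightarrow> dist (V x) (V a) < 1"
    using zero_less_one by blast
  define e where "e = min e1 e2"
  have e: "e > 0" "ball a e \<subseteq> I" using e1 e2 by (auto simp: e_def)
  have pos: "V x \<bullet> V a > 0" if "x \<in> ball a e" for x
  proof -
    have "dist x a < e2" using that by (simp add: e_def dist_commute)
    then have "dist (V x) (V a) < 1" using e2 by blast
    then have "(norm (V x - V a))\<^sup>2 < 1" by (simp add: dist_norm power_less_one_iff)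
    moreover have "norm (V x) = 1" "norm (V a) = 1" using nV that e a by auto
    ultimately show ?thesis by (simp add: dot_norm_neg)
  qed
  have "(f x > 0) = (f a > 0)" if x: "x \<in> ball a e" for x
  proof -
    define lo where "lo = min a x"
    define hi where "hi = max a x"
    have sub: "{lo..hi} \<subseteq> ball a e"
    proof
      fix t assume "t \<in> {lo..hi}"
      then have "dist t a \<le> dist x a" by (auto simp: lo_def hi_def dist_real_def)
      then show "t \<in> ball a e" using x by (auto simp: dist_commute)
    qed
    have der: "((\<lambda>t. \<gamma> t \<bullet> V a) has_real_derivative (f t * (V t \<bullet> V a))) (at t)"
      if "t \<in> {lo..hi}" for t
      using inner_deriv_const[OF gd, of t "V a"] sub that e by (auto simp: subset_iff)
    have nz: "f t * (V t \<bullet> V a) \<noteq> 0" if "t \<in> {lo..hi}" for t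
      using fnz[of t] pos[of t] sub that e by (auto simp: subset_iff)
    have sg: "(f t * (V t \<bullet> V a) > 0) = (f t > 0)" if "t \<in> {lo..hi}" for t
      using pos[of t] sub that by (auto simp: zero_less_mult_iff)
    have "(f lo * (V lo \<bullet> V a) > 0) = (f hi * (V hi \<bullet> V a) > 0)"
      by (rule darboux_sign[OF _ der nz]) (auto simp: lo_def hi_def)
    moreover have "lo \<in> {lo..hi}" "hi \<in> {lo..hi}" by (auto simp: lo_def hi_def)
    ultimately have "(f lo > 0) = (f hi > 0)" using sg by blast
    then show ?thesis unfolding lo_def hi_def by (cases "a \<le> x") (simp_all add: min_def max_def)
  qed
  then show ?thesis using e by blast
qed

lemma sign_const:
  fixes V \<gamma> :: "real \<Rightarrow> vec3" and f :: "real \<Rightarrow> real"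
  assumes I: "open I" "is_interval I"
    and Vc: "continuous_on I V"
    and nV: "\<And>s. s \<in> I \<Longrightarrow> norm (V s) = 1"
    and gd: "\<And>s. s \<in> I \<Longrightarrow> (\<gamma> has_vector_derivative f s *\<^sub>R V s) (at s)"
    and fnz: "\<And>s. s \<in> I \<Longrightarrow> f s \<noteq> 0"
  shows "(\<lambda>s. f s > 0) constant_on I"
proof (rule locally_constant_imp_constant)
  show "connected I" using I is_interval_connected by blast
next
  fix a assume a: "a \<in> I"
  obtain e where "e>0" "ball a e \<subseteq> I" "\<forall>x\<in>ball a e. (f x > 0) = (f a > 0)"
    using sign_local[OF I(1) Vc nV gd fnz a] by blast
  then show "\<exists>T. openin (top_of_set I) T \<and> a \<in> T \<and> (\<forall>x\<in>T. (f x > 0) = (f a > 0))"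
  proof (intro exI conjI)
    show "openin (top_of_set I) (ball a e)"
      using open_openin_trans[OF I(1) open_ball \<open>ball a e \<subseteq> I\<close>] .
    show "a \<in> ball a e" using \<open>e > 0\<close> by simp
  qed (use \<open>\<forall>x\<in>ball a e. (f x > 0) = (f a > 0)\<close> in blast)
qed


lemma helix_equiv:
  fixes V \<gamma> :: "real \<Rightarrow> vec3" and f :: "real \<Rightarrow> real"
  assumes I: "open I" "is_interval I"
    and Vc: "continuous_on I V"
    and nV: "\<And>s. s \<in> I \<Longrightarrow> norm (V s) = 1"
    and gd: "\<And>s. s \<in> I \<Longrightarrow> (\<gamma> has_vector_derivative f s *\<^sub>R V s) (at s)"
    and fnz: "\<And>s. s \<in> I \<Longrightarrow> f s \<noteq> 0"
    and reg: "regular_curve I \<gamma>"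
  shows "general_helix I \<gamma> \<longleftrightarrow> rel_normal_slant_helix I V"
proof -
  define \<sigma> :: real where "\<sigma> = (if \<exists>s\<in>I. f s > 0 then 1 else -1)"
  have sc: "(\<lambda>s. f s > 0) constant_on I" by (rule sign_const[OF I Vc nV gd fnz])
  have sig: "(f s > 0) = (\<sigma> = 1)" if "s \<in> I" for s
    using sc that unfolding constant_on_def \<sigma>_def by auto
  have ut: "vector_derivative \<gamma> (at s) /\<^sub>R norm (vector_derivative \<gamma> (at s)) = \<sigma> *\<^sub>R V s"
    if s: "s \<in> I" for s
  proof -
    have "vector_derivative \<gamma> (at s) = f s *\<^sub>R V s" using gd[OF s] by (rule vector_derivative_at)
    moreover have "norm (f s *\<^sub>R V s) = \<bar>f s\<bar>" using nV[OF s] by simp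
    moreover have "\<sigma> = 1 \<or> \<sigma> = -1" by (simp add: \<sigma>_def)
    ultimately show ?thesis using sig[OF s] fnz[OF s]
      by (auto simp: abs_if)
  qed
  have ss: "\<sigma> * \<sigma> = 1" by (simp add: \<sigma>_def)
  show ?thesis
  proof
    assume "general_helix I \<gamma>"
    then obtain d c where d: "norm d = 1"
      "\<forall>s\<in>I. (vector_derivative \<gamma> (at s) /\<^sub>R norm (vector_derivative \<gamma> (at s))) \<bullet> d = c"
      unfolding general_helix_def by blast
    have "\<forall>s\<in>I. V s \<bullet> d = \<sigma> * c"
    proof
      fix s assume s: "s \<in> I"
      have "(\<sigma> *\<^sub>R V s) \<bullet> d = c" using d(2) s ut[OF s] by metis
      then have "\<sigma> * (V s \<bullet> d) = c" by simp
      then have "\<sigma> * (\<sigma> * (V s \<bullet> d)) = \<sigma> * c" by simp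
      then show "V s \<bullet> d = \<sigma> * c" using ss by (simp add: mult.assoc[symmetric])
    qed
    then show "rel_normal_slant_helix I V" unfolding rel_normal_slant_helix_def using d(1) by blast
  next
    assume "rel_normal_slant_helix I V"
    then obtain d c where d: "norm d = 1" "\<forall>s\<in>I. V s \<bullet> d = c"
      unfolding rel_normal_slant_helix_def by blast
    have "\<forall>s\<in>I. (vector_derivative \<gamma> (at s) /\<^sub>R norm (vector_derivative \<gamma> (at s))) \<bullet> d = \<sigma> * c"
      using d(2) ut by simp
    then show "general_helix I \<gamma>" unfolding general_helix_def using reg d(1) by blast
  qed
qed


lemma frame_facts:
  assumes frame: "darboux_frame I \<alpha> T V U kg kn tg" and s: "s \<in> I"
  shows "V s \<bullet> V s = 1" "V s \<bullet> U s = 0" "V s \<bullet> T s = 0" "norm (V s) = 1"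
proof -
  have f: "norm (T s) = 1" "norm (U s) = 1" "T s \<bullet> U s = 0" "V s = cross3 (U s) (T s)"
    using frame s unfolding darboux_frame_def by auto
  have "(norm (V s))\<^sup>2 + (U s \<bullet> T s)\<^sup>2 = (norm (U s) * norm (T s))\<^sup>2"
    using f(4) norm_cross_dot by simp
  then have "(norm (V s))\<^sup>2 = 1" using f by (simp add: inner_commute)
  then show nv: "norm (V s) = 1" using norm_ge_zero[of "V s"] by (auto simp: power2_eq_1_iff)
  then show "V s \<bullet> V s = 1" by (simp add: inner_commute dot_square_norm)
  show "V s \<bullet> U s = 0" "V s \<bullet> T s = 0" using f(4) dot_cross_self by (simp_all add: inner_commute)
qed

lemma reduce:
  fixes \<alpha> T V U \<gamma> :: "real \<Rightarrow> vec3" and A B Bd kg kn tg :: "real \<Rightarrow> real"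
  assumes I: "open I" and frame: "darboux_frame I \<alpha> T V U kg kn tg"
    and Bd: "\<And>s. s \<in> I \<Longrightarrow> (B has_real_derivative Bd s) (at s)"
    and eq: "\<And>s. s \<in> I \<Longrightarrow> \<gamma> s = \<alpha> s + A s *\<^sub>R V s + B s *\<^sub>R U s"
    and r1: "\<And>s. s \<in> I \<Longrightarrow> A s * kg s + B s * kn s = 1"
    and r2: "\<And>s. s \<in> I \<Longrightarrow> A s * tg s + Bd s = 0"
    and gdiff: "\<And>s. s \<in> I \<Longrightarrow> \<gamma> differentiable (at s)"
    and s: "s \<in> I"
  shows "(\<gamma> has_vector_derivative (vector_derivative \<gamma> (at s) \<bullet> V s) *\<^sub>R V s) (at s)"
proof -
  define A2 where "A2 t = (\<gamma> t - \<alpha> t - B t *\<^sub>R U t) \<bullet> V t" for t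
  have A2A: "A2 t = A t" if "t \<in> I" for t
    using frame_facts[OF frame that] eq[OF that]
    by (simp add: A2_def inner_add_left inner_commute)
  define G where "G = vector_derivative \<gamma> (at s)"
  have Gd: "(\<gamma> has_vector_derivative G) (at s)"
    using gdiff[OF s] unfolding G_def by (simp add: vector_derivative_works)
  have fr: "(\<alpha> has_vector_derivative T s) (at s)"
    "(V has_vector_derivative (- kg s *\<^sub>R T s + tg s *\<^sub>R U s)) (at s)"
    "(U has_vector_derivative (- kn s *\<^sub>R T s - tg s *\<^sub>R V s)) (at s)"
    using frame s unfolding darboux_frame_def by auto
  have Xd: "((\<lambda>t. \<gamma> t - \<alpha> t - B t *\<^sub>R U t) has_vector_derivative
      (G - T s - (B s *\<^sub>R (- kn s *\<^sub>R T s - tg s *\<^sub>R V s) + Bd s *\<^sub>R U s))) (at s)"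
    by (intro derivative_intros Gd fr Bd[OF s])
  obtain A2d where A2d: "(A2 has_real_derivative A2d) (at s)"
    using bounded_bilinear.has_vector_derivative[OF bounded_bilinear_inner Xd fr(2)]
    unfolding A2_def has_real_derivative_iff_has_vector_derivative[symmetric] by blast
  define D where "D = T s + (A2 s *\<^sub>R (- kg s *\<^sub>R T s + tg s *\<^sub>R U s) + A2d *\<^sub>R V s)
       + (B s *\<^sub>R (- kn s *\<^sub>R T s - tg s *\<^sub>R V s) + Bd s *\<^sub>R U s)"
  have Rd: "((\<lambda>t. \<alpha> t + A2 t *\<^sub>R V t + B t *\<^sub>R U t) has_vector_derivative D) (at s)"
    unfolding D_def by (intro derivative_intros fr Bd[OF s] A2d)
  have gD: "(\<gamma> has_vector_derivative D) (at s)"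
    by (rule has_vector_derivative_transform_within_open[OF Rd I s]) (simp add: A2A eq)
  have GD: "G = D" using vector_derivative_at[OF gD] by (simp add: G_def)
  have "D = (1 - A s * kg s - B s * kn s) *\<^sub>R T s + (A2d - B s * tg s) *\<^sub>R V s
            + (A s * tg s + Bd s) *\<^sub>R U s"
    unfolding D_def A2A[OF s] by (simp add: algebra_simps)
  also have "\<dots> = (A2d - B s * tg s) *\<^sub>R V s"
    using r1[OF s] r2[OF s] by (simp add: algebra_simps)
  finally have DV: "D = (A2d - B s * tg s) *\<^sub>R V s" .
  then have "D \<bullet> V s = A2d - B s * tg s" using frame_facts(1)[OF frame s] by simp
  then have "D = (D \<bullet> V s) *\<^sub>R V s" using DV by simp
  then show ?thesis using gD GD G_def by simp
qed


lemma main_generic: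
  fixes \<alpha> T V U \<gamma> :: "real \<Rightarrow> vec3" and A B Bd kg kn tg :: "real \<Rightarrow> real"
  assumes I: "open I" "is_interval I" and frame: "darboux_frame I \<alpha> T V U kg kn tg"
    and Bd: "\<And>s. s \<in> I \<Longrightarrow> (B has_real_derivative Bd s) (at s)"
    and eq: "\<And>s. s \<in> I \<Longrightarrow> \<gamma> s = \<alpha> s + A s *\<^sub>R V s + B s *\<^sub>R U s"
    and r1: "\<And>s. s \<in> I \<Longrightarrow> A s * kg s + B s * kn s = 1"
    and r2: "\<And>s. s \<in> I \<Longrightarrow> A s * tg s + Bd s = 0"
    and reg: "regular_curve I \<gamma>"
  shows "general_helix I \<gamma> \<longleftrightarrow> rel_normal_slant_helix I V"
proof (rule helix_equiv[OF I _ _ _ _ reg])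
  show "continuous_on I V"
    using frame unfolding darboux_frame_def
    by (meson continuous_at_imp_continuous_on has_vector_derivative_continuous)
  show "\<And>s. s \<in> I \<Longrightarrow> norm (V s) = 1" using frame_facts(4)[OF frame] .
  have gdiff: "\<And>s. s \<in> I \<Longrightarrow> \<gamma> differentiable (at s)" using reg unfolding regular_curve_def by blast
  show gd: "\<And>s. s \<in> I \<Longrightarrow> (\<gamma> has_vector_derivative (vector_derivative \<gamma> (at s) \<bullet> V s) *\<^sub>R V s) (at s)"
    by (rule reduce[OF I(1) frame Bd eq r1 r2 gdiff])
  show "\<And>s. s \<in> I \<Longrightarrow> vector_derivative \<gamma> (at s) \<bullet> V s \<noteq> 0"
  proof
    fix s assume s: "s \<in> I" and z: "vector_derivative \<gamma> (at s) \<bullet> V s = 0"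
    have "vector_derivative \<gamma> (at s) = 0"
      using vector_derivative_at[OF gd[OF s]] z by simp
    then show False using reg s unfolding regular_curve_def by blast
  qed
qed

theorem theorem3p14:
  fixes I :: "real set" and \<alpha> T V U \<gamma> :: "real \<Rightarrow> vec3" and kg kn tg :: "real \<Rightarrow> real"
  assumes I: "open I" "is_interval I"
    and frame: "darboux_frame I \<alpha> T V U kg kn tg"
    and cases:
      "(\<forall>s\<in>I. kg s = 0 \<and> kn s \<noteq> 0 \<and> tg s \<noteq> 0 \<and> kn differentiable (at s) \<and>
          \<gamma> s = \<alpha> s + (deriv kn s / ((kn s)\<^sup>2 * tg s)) *\<^sub>R V s + (1 / kn s) *\<^sub>R U s)
       \<or>
       (\<exists>c3 \<psi> \<Phi>. \<forall>s\<in>I. kg s \<noteq> 0 \<and>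
          (\<psi> has_real_derivative (kn s * tg s / kg s)) (at s) \<and>
          (\<Phi> has_real_derivative (exp (- \<psi> s) * tg s / kg s)) (at s) \<and>
          \<gamma> s = \<alpha> s + (kn s / kg s * exp (\<psi> s) * (\<Phi> s - c3) + 1 / kg s) *\<^sub>R V s
                + (exp (\<psi> s) * (c3 - \<Phi> s)) *\<^sub>R U s)"
    and reg: "regular_curve I \<gamma>"
  shows "general_helix I \<gamma> \<longleftrightarrow> rel_normal_slant_helix I V"
  using cases
proof
  assume H: "\<forall>s\<in>I. kg s = 0 \<and> kn s \<noteq> 0 \<and> tg s \<noteq> 0 \<and> kn differentiable (at s) \<and>
          \<gamma> s = \<alpha> s + (deriv kn s / ((kn s)\<^sup>2 * tg s)) *\<^sub>R V s + (1 / kn s) *\<^sub>R U s"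
  show ?thesis
  proof (rule main_generic[OF I frame _ _ _ _ reg,
        where A = "\<lambda>s. deriv kn s / ((kn s)\<^sup>2 * tg s)" and B = "\<lambda>s. 1 / kn s"
          and Bd = "\<lambda>s. - deriv kn s / (kn s)\<^sup>2"])
    fix s assume s: "s \<in> I"
    have kd: "(kn has_real_derivative deriv kn s) (at s)"
      using H s DERIV_deriv_iff_real_differentiable by blast
    have kn0: "kn s \<noteq> 0" "tg s \<noteq> 0" "kg s = 0" using H s by auto
    show "((\<lambda>s. 1 / kn s) has_real_derivative - deriv kn s / (kn s)\<^sup>2) (at s)"
      using kn0 by (auto intro!: derivative_eq_intros kd simp: power2_eq_square)
    show "\<gamma> s = \<alpha> s + (deriv kn s / ((kn s)\<^sup>2 * tg s)) *\<^sub>R V s + (1 / kn s) *\<^sub>R U s"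
      using H s by blast
    show "deriv kn s / ((kn s)\<^sup>2 * tg s) * kg s + 1 / kn s * kn s = 1" using kn0 by simp
    show "deriv kn s / ((kn s)\<^sup>2 * tg s) * tg s + - deriv kn s / (kn s)\<^sup>2 = 0"
      using kn0 by (simp add: field_simps)
  qed
next
  assume "\<exists>c3 \<psi> \<Phi>. \<forall>s\<in>I. kg s \<noteq> 0 \<and>
          (\<psi> has_real_derivative (kn s * tg s / kg s)) (at s) \<and>
          (\<Phi> has_real_derivative (exp (- \<psi> s) * tg s / kg s)) (at s) \<and>
          \<gamma> s = \<alpha> s + (kn s / kg s * exp (\<psi> s) * (\<Phi> s - c3) + 1 / kg s) *\<^sub>R V s
                + (exp (\<psi> s) * (c3 - \<Phi> s)) *\<^sub>R U s"
  then obtain c3 \<psi> \<Phi> where H: "\<forall>s\<in>I. kg s \<noteq> 0 \<and>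
          (\<psi> has_real_derivative (kn s * tg s / kg s)) (at s) \<and>
          (\<Phi> has_real_derivative (exp (- \<psi> s) * tg s / kg s)) (at s) \<and>
          \<gamma> s = \<alpha> s + (kn s / kg s * exp (\<psi> s) * (\<Phi> s - c3) + 1 / kg s) *\<^sub>R V s
                + (exp (\<psi> s) * (c3 - \<Phi> s)) *\<^sub>R U s" by blast
  show ?thesis
  proof (rule main_generic[OF I frame _ _ _ _ reg,
        where A = "\<lambda>s. kn s / kg s * exp (\<psi> s) * (\<Phi> s - c3) + 1 / kg s"
          and B = "\<lambda>s. exp (\<psi> s) * (c3 - \<Phi> s)"
          and Bd = "\<lambda>s. exp (\<psi> s) * (kn s * tg s / kg s) * (c3 - \<Phi> s)
                        - exp (\<psi> s) * (exp (- \<psi> s) * tg s / kg s)"])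
    fix s assume s: "s \<in> I"
    have d: "(\<psi> has_real_derivative (kn s * tg s / kg s)) (at s)"
      "(\<Phi> has_real_derivative (exp (- \<psi> s) * tg s / kg s)) (at s)" "kg s \<noteq> 0"
      using H s by auto
    show "((\<lambda>s. exp (\<psi> s) * (c3 - \<Phi> s)) has_real_derivative
        exp (\<psi> s) * (kn s * tg s / kg s) * (c3 - \<Phi> s)
                        - exp (\<psi> s) * (exp (- \<psi> s) * tg s / kg s)) (at s)"
      using d(3) by (auto intro!: derivative_eq_intros d(1,2) simp: field_simps)
    show "\<gamma> s = \<alpha> s + (kn s / kg s * exp (\<psi> s) * (\<Phi> s - c3) + 1 / kg s) *\<^sub>R V s
                + (exp (\<psi> s) * (c3 - \<Phi> s)) *\<^sub>R U s"
      using H s by blast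
    show "(kn s / kg s * exp (\<psi> s) * (\<Phi> s - c3) + 1 / kg s) * kg s
          + exp (\<psi> s) * (c3 - \<Phi> s) * kn s = 1"
      using d(3) by (simp add: field_simps)
    have ee: "exp (\<psi> s) * exp (- \<psi> s) = 1" by (simp add: exp_minus)
    show "(kn s / kg s * exp (\<psi> s) * (\<Phi> s - c3) + 1 / kg s) * tg s +
        (exp (\<psi> s) * (kn s * tg s / kg s) * (c3 - \<Phi> s)
                        - exp (\<psi> s) * (exp (- \<psi> s) * tg s / kg s)) = 0"
      using d(3) ee by (simp add: field_simps)
  qed
qed

end
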